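(* Let $0\le r\le n$ be integers and let $\alpha,\beta$ be indeterminates. Then \[\sum_{A\in\mathcal{A}_{n+1,r+1}} \alpha^{-|\mathrm{lrs}(A)|}\,\beta^{-|\mathrm{rls}(A)|} \;=\; \binom{n}{r}\prod_{i=r}^{n-1}\left(\alpha^{-1}+\beta^{-1}+i\right).\]
   Context: An assemblée of size $(m,s)$ is a collection of $s$ nonempty, pairwise disjoint, linearly ordered sets (blocks) whose union is $\{1,\dots,m\}$; the last element of a block is its block-end. The blocks are always listed in the canonical order in which the block-ends decrease from left to right, and the assemblée is identified with the word of length $m$ obtained by concatenating its blocks in this order ("left/right in $A$" refers to this word). $\mathcal{A}_{m,s}$ denotes the set of assemblées of size $(m,s)$. For $A\in\mathcal{A}_{n+1,r+1}$ let $b_1>b_2>\dots>b_{r+1}$ be its block-ends. Then $\mathrm{lrs}(A)$ is the set of elements $x$ of $A$ with $x>b_1$ such that $x$ is larger than every element $y>b_1$ appearing to the right of $x$ in $A$; and $\mathrm{rls}(A)$ is the set of elements $x$ of $A$ with $x<b_{r+1}$ such that $x$ is larger than every element $y<b_{r+1}$ appearing to the left of $x$ in $A$. (Example: for $A=[2,10,12,7]\,[5,9,1,8,6]\,[3,11,4]$, $\mathrm{lrs}(A)=\{12,11\}$ and $\mathrm{rls}(A)=\{3,2\}$.) *)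

theory Defs
  imports Main
begin

text \<open>An assemblee of size (m,s) is represented by the list of its blocks in canonical
order (block-ends strictly decreasing from left to right); each block is a nonempty
list (a linearly ordered set), the blocks are pairwise disjoint (the concatenation is
distinct) and their union is {1..m}. This list representation is in bijection with the
collections of blocks.\<close>

definition assemblees :: "nat \<Rightarrow> nat \<Rightarrow> nat list list set" where
  "assemblees m s = {bs. length bs = s \<and> (\<forall>b\<in>set bs. b \<noteq> []) \<and>
      distinct (concat bs) \<and> set (concat bs) = {1..m} \<and>
      sorted_wrt (>) (map last bs)}"

definition aword :: "nat list list \<Rightarrow> nat list" where
  "aword bs = concat bs"

definition lrs :: "nat list list \<Rightarrow> nat set" where
  "lrs bs = (let w = aword bs; b1 = last (hd bs) in
     {w ! i | i. i < length w \<and> w ! i > b1 \<and>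
        (\<forall>j. i < j \<and> j < length w \<and> w ! j > b1 \<longrightarrow> w ! j < w ! i)})"

definition rls :: "nat list list \<Rightarrow> nat set" where
  "rls bs = (let w = aword bs; bl = last (last bs) in
     {w ! i | i. i < length w \<and> w ! i < bl \<and>
        (\<forall>j. j < i \<and> w ! j < bl \<longrightarrow> w ! j < w ! i)})"

end

theory Submission
  imports Defs
begin

definition lset :: "nat \<Rightarrow> nat list \<Rightarrow> nat set" where
  "lset H w = {w ! i | i. i < length w \<and> H < w ! i \<and>
        (\<forall>j. i < j \<and> j < length w \<and> H < w ! j \<longrightarrow> w ! j < w ! i)}"

definition rset :: "nat \<Rightarrow> nat \<Rightarrow> nat list \<Rightarrow> nat set" where
  "rset L t w = {w ! i | i. i < length w \<and> t \<le> w ! i \<and> w ! i < L \<and>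
        (\<forall>j. j < i \<and> w ! j < L \<longrightarrow> w ! j < w ! i)}"

lemma lset_sub: "lset H w \<subseteq> set w"
  unfolding lset_def by auto

lemma rset_sub: "rset L t w \<subseteq> set w"
  unfolding rset_def by auto

lemma lset_Nil[simp]: "lset H [] = {}" unfolding lset_def by auto
lemma rset_Nil[simp]: "rset L t [] = {}" unfolding rset_def by auto

lemma lset_Cons:
  "lset H (a#w) = (if H < a \<and> (\<forall>b\<in>set w. H < b \<longrightarrow> b < a) then insert a (lset H w) else lset H w)"
proof -
  have A: "x \<in> lset H (a#w) \<longleftrightarrow> (x = a \<and> H < a \<and> (\<forall>b\<in>set w. H < b \<longrightarrow> b < a)) \<or> x \<in> lset H w" for x
  proof
    assume "x \<in> lset H (a#w)"
    then obtain i where i: "i < Suc (length w)" "x = (a#w)!i" "H < (a#w)!i"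
      "\<forall>j. i < j \<and> j < Suc (length w) \<and> H < (a#w) ! j \<longrightarrow> (a#w) ! j < (a#w) ! i"
      unfolding lset_def by auto
    show "(x = a \<and> H < a \<and> (\<forall>b\<in>set w. H < b \<longrightarrow> b < a)) \<or> x \<in> lset H w"
    proof (cases i)
      case 0
      have "\<forall>b\<in>set w. H < b \<longrightarrow> b < a"
      proof (intro ballI impI)
        fix b assume "b \<in> set w" "H < b"
        then obtain j where "j < length w" "w!j = b" by (auto simp: in_set_conv_nth)
        with i(4)[rule_format, of "Suc j"] 0 \<open>H < b\<close> show "b < a" by auto
      qed
      with 0 i show ?thesis by auto
    next
      case (Suc k)
      have "x \<in> lset H w" unfolding lset_def
      proof (intro CollectI exI conjI allI impI)
        show "x = w!k" using i Suc by simp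
        show "k < length w" using i Suc by simp
        show "H < w!k" using i Suc by simp
        fix j assume "k < j \<and> j < length w \<and> H < w ! j"
        with i(4)[rule_format, of "Suc j"] Suc show "w!j < w!k" by auto
      qed
      then show ?thesis by simp
    qed
  next
    assume "(x = a \<and> H < a \<and> (\<forall>b\<in>set w. H < b \<longrightarrow> b < a)) \<or> x \<in> lset H w"
    then show "x \<in> lset H (a#w)"
    proof
      assume h: "x = a \<and> H < a \<and> (\<forall>b\<in>set w. H < b \<longrightarrow> b < a)"
      show ?thesis unfolding lset_def
      proof (intro CollectI exI conjI allI impI)
        show "x = (a#w)!0" using h by simp
        fix j assume j: "0 < j \<and> j < length (a#w) \<and> H < (a#w) ! j"
        then obtain k where "j = Suc k" by (cases j) auto
        with j h show "(a#w)!j < (a#w)!0" by auto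
      qed (use h in auto)
    next
      assume "x \<in> lset H w"
      then obtain i where i: "i < length w" "x = w!i" "H < w!i"
        "\<forall>j. i < j \<and> j < length w \<and> H < w ! j \<longrightarrow> w ! j < w ! i"
        unfolding lset_def by auto
      show ?thesis unfolding lset_def
      proof (intro CollectI exI conjI allI impI)
        show "x = (a#w)!Suc i" using i by simp
        fix j assume j: "Suc i < j \<and> j < length (a#w) \<and> H < (a#w) ! j"
        then obtain k where "j = Suc k" by (cases j) auto
        with j i show "(a#w)!j < (a#w)!Suc i" by auto
      qed (use i in auto)
    qed
  qed
  show ?thesis using A by auto
qed

lemma rset_Cons:
  "rset L t (a#w) = (if a < L \<and> t \<le> a then insert a (rset L (max t (Suc a)) w)
     else rset L (if a < L then max t (Suc a) else t) w)"
proof -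
  define t' where "t' = (if a < L then max t (Suc a) else t)"
  have A: "x \<in> rset L t (a#w) \<longleftrightarrow> (x = a \<and> a < L \<and> t \<le> a) \<or> x \<in> rset L t' w" for x
  proof
    assume "x \<in> rset L t (a#w)"
    then obtain i where i: "i < Suc (length w)" "x = (a#w)!i" "t \<le> (a#w)!i" "(a#w)!i < L"
      "\<forall>j. j < i \<and> (a#w)!j < L \<longrightarrow> (a#w) ! j < (a#w) ! i"
      unfolding rset_def by auto
    show "(x = a \<and> a < L \<and> t \<le> a) \<or> x \<in> rset L t' w"
    proof (cases i)
      case 0
      with i show ?thesis by auto
    next
      case (Suc k)
      have "x \<in> rset L t' w" unfolding rset_def
      proof (intro CollectI exI conjI allI impI)
        show "x = w!k" using i Suc by simp
        show "k < length w" using i Suc by simp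
        show "w!k < L" using i Suc by simp
        have "a < L \<Longrightarrow> a < w!k" using i(5)[rule_format, of 0] Suc by simp
        then show "t' \<le> w!k" using i(3) Suc unfolding t'_def by auto
        fix j assume "j < k \<and> w ! j < L"
        with i(5)[rule_format, of "Suc j"] Suc show "w!j < w!k" by auto
      qed
      then show ?thesis by simp
    qed
  next
    assume "(x = a \<and> a < L \<and> t \<le> a) \<or> x \<in> rset L t' w"
    then show "x \<in> rset L t (a#w)"
    proof
      assume h: "x = a \<and> a < L \<and> t \<le> a"
      show ?thesis unfolding rset_def
      proof (intro CollectI exI conjI allI impI)
        show "x = (a#w)!0" using h by simp
      qed (use h in auto)
    next
      assume "x \<in> rset L t' w"
      then obtain i where i: "i < length w" "x = w!i" "t' \<le> w!i" "w!i < L"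
        "\<forall>j. j < i \<and> w!j < L \<longrightarrow> w ! j < w ! i"
        unfolding rset_def by auto
      show ?thesis unfolding rset_def
      proof (intro CollectI exI conjI allI impI)
        show "x = (a#w)!Suc i" using i by simp
        show "t \<le> (a#w)!Suc i" using i(3) unfolding t'_def by (auto split: if_splits)
        fix j assume j: "j < Suc i \<and> (a#w) ! j < L"
        show "(a#w)!j < (a#w)!Suc i"
        proof (cases j)
          case 0 thus ?thesis using j i(3) unfolding t'_def by auto
        next
          case (Suc k) thus ?thesis using j i by auto
        qed
      qed (use i in auto)
    qed
  qed
  show ?thesis
  proof (cases "a < L \<and> t \<le> a")
    case True
    then show ?thesis using A unfolding t'_def by (intro set_eqI) simp
  next
    case False
    then show ?thesis using A unfolding t'_def by (intro set_eqI) (simp only: if_False, blast)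
  qed
qed

definition asm :: "nat set \<Rightarrow> nat \<Rightarrow> nat list list set" where
  "asm S s = {bs. length bs = s \<and> (\<forall>b\<in>set bs. b \<noteq> []) \<and>
      distinct (concat bs) \<and> set (concat bs) = S \<and> sorted_wrt (>) (map last bs)}"

definition fam :: "nat set \<Rightarrow> nat \<Rightarrow> nat \<Rightarrow> nat \<Rightarrow> nat list list set" where
  "fam S r E L = {bs \<in> asm S (Suc r). last (last bs) = L \<and> last (hd bs) \<le> E}"

definition cne :: "nat \<Rightarrow> nat list list \<Rightarrow> nat list list" where
  "cne a bs = (a # hd bs) # tl bs"

lemma asm_finite: "finite S \<Longrightarrow> finite (asm S s)"
proof -
  assume fS: "finite S"
  let ?B = "{xs. set xs \<subseteq> S \<and> length xs \<le> card S}"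
  have fB: "finite ?B" using finite_lists_length_le[OF fS] by simp
  have "asm S s \<subseteq> {bs. set bs \<subseteq> ?B \<and> length bs \<le> s}"
  proof
    fix bs assume "bs \<in> asm S s"
    hence h: "length bs = s" "distinct (concat bs)" "set (concat bs) = S" unfolding asm_def by auto
    have "\<forall>b\<in>set bs. set b \<subseteq> S \<and> length b \<le> card S"
    proof
      fix b assume b: "b \<in> set bs"
      have "set b \<subseteq> S" using b h(3) by auto
      moreover have "distinct b" using b h(2) by (simp add: distinct_concat_iff)
      ultimately have "length b \<le> card S" using fS distinct_card card_mono by metis
      with \<open>set b \<subseteq> S\<close> show "set b \<subseteq> S \<and> length b \<le> card S" by simp
    qed
    with h(1) show "bs \<in> {bs. set bs \<subseteq> ?B \<and> length bs \<le> s}" by auto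
  qed
  moreover have "finite {bs. set bs \<subseteq> ?B \<and> length bs \<le> s}"
    by (rule finite_lists_length_le[OF fB])
  ultimately show ?thesis by (rule finite_subset)
qed

lemma fam_finite: "finite S \<Longrightarrow> finite (fam S r E L)"
  unfolding fam_def using asm_finite by auto

lemma sorted_last_le_hd:
  fixes bs :: "nat list list"
  assumes "sorted_wrt (>) (map last bs)" "bs \<noteq> []" "b \<in> set bs"
  shows "last b \<le> last (hd bs)"
proof -
  obtain c rest where bs: "bs = c # rest" using assms(2) by (cases bs) auto
  show ?thesis using assms(1,3) unfolding bs by (auto simp: le_less)
qed

lemma concat_cne: "bs \<noteq> [] \<Longrightarrow> concat (cne a bs) = a # concat bs"
  unfolding cne_def by (cases bs) auto

lemma F1_bij:
  assumes "L \<in> S"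
  shows "bij_betw (\<lambda>(a,bs). cne a bs) (SIGMA a:S-{L}. fam (S-{a}) r E L)
           {bs\<in>fam S r E L. tl (hd bs) \<noteq> []}"
proof (rule bij_betwI')
  fix p q assume p: "p \<in> (SIGMA a:S-{L}. fam (S-{a}) r E L)" and q: "q \<in> (SIGMA a:S-{L}. fam (S-{a}) r E L)"
  obtain a bs where pa: "p = (a,bs)" by (cases p)
  obtain a' bs' where qa: "q = (a',bs')" by (cases q)
  have "bs \<noteq> []" "bs' \<noteq> []" using p q unfolding pa qa fam_def asm_def by auto
  then show "((\<lambda>(a,bs). cne a bs) p = (\<lambda>(a,bs). cne a bs) q) = (p = q)"
    unfolding pa qa cne_def by (cases bs; cases bs') auto
next
  fix p assume p: "p \<in> (SIGMA a:S-{L}. fam (S-{a}) r E L)"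
  obtain a bs where pa: "p = (a,bs)" by (cases p)
  have a: "a \<in> S" "a \<noteq> L" and bs: "bs \<in> fam (S-{a}) r E L" using p pa by auto
  obtain b rest where bsr: "bs = b # rest" using bs unfolding fam_def asm_def by (cases bs) auto
  have hb: "b \<noteq> []" using bs bsr unfolding fam_def asm_def by auto
  have lb: "last (a # b) = last b" using hb by simp
  have "cne a bs \<in> fam S r E L"
    using bs a hb unfolding fam_def asm_def cne_def bsr by (auto simp: lb split: if_splits)
  moreover have "tl (hd (cne a bs)) \<noteq> []" using hb unfolding cne_def bsr by simp
  ultimately show "(\<lambda>(a,bs). cne a bs) p \<in> {bs\<in>fam S r E L. tl (hd bs) \<noteq> []}" using pa by simp
next
  fix bs assume h: "bs \<in> {bs\<in>fam S r E L. tl (hd bs) \<noteq> []}"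
  then have bs: "bs \<in> fam S r E L" and tl: "tl (hd bs) \<noteq> []" by auto
  obtain c rest where bsr: "bs = c # rest" using bs unfolding fam_def asm_def by (cases bs) auto
  obtain a b where c: "c = a # b" using tl bsr by (cases c) auto
  have hb: "b \<noteq> []" using tl bsr c by simp
  have lb: "last (a # b) = last b" using hb by simp
  have dist: "distinct (a # concat (b # rest))" using bs unfolding fam_def asm_def bsr c by simp
  have Lin: "L \<in> set (concat (b # rest))"
  proof (cases rest)
    case Nil
    then have "L = last b" using bs hb unfolding fam_def asm_def bsr c by simp
    then show ?thesis using hb by simp
  next
    case (Cons d ds)
    have "last rest \<in> set rest" "last rest \<noteq> []" using bs Cons unfolding fam_def asm_def bsr by auto
    moreover have "L = last (last rest)" using bs Cons unfolding fam_def asm_def bsr by simp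
    ultimately show ?thesis by force
  qed
  have aS: "a \<in> S" "a \<noteq> L" using bs dist Lin unfolding fam_def asm_def bsr c by auto
  have "b # rest \<in> fam (S - {a}) r E L"
    using bs dist hb unfolding fam_def asm_def bsr c by (auto simp: lb split: if_splits)
  moreover have "bs = cne a (b # rest)" unfolding cne_def bsr c by simp
  ultimately show "\<exists>p\<in>(SIGMA a:S-{L}. fam (S-{a}) r E L). bs = (\<lambda>(a,bs). cne a bs) p"
    using aS by (intro bexI[of _ "(a, b # rest)"]) auto
qed

lemma F2_bij:
  assumes "L \<in> S" "finite S" "2 \<le> card S" "0 < r"
  shows "bij_betw (\<lambda>(a,bs). [a] # bs) (SIGMA a:{a\<in>S. L < a \<and> a \<le> E}. fam (S-{a}) (r-1) (a-1) L)
           {bs\<in>fam S r E L. tl (hd bs) = []}"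
proof (rule bij_betwI')
  fix p q show "((\<lambda>(a,bs). [a] # bs) p = (\<lambda>(a,bs). [a] # bs) q) = (p = q)"
    by (cases p; cases q) auto
next
  fix p assume p: "p \<in> (SIGMA a:{a\<in>S. L < a \<and> a \<le> E}. fam (S-{a}) (r-1) (a-1) L)"
  obtain a bs where pa: "p = (a,bs)" by (cases p)
  have a: "a \<in> S" "L < a" "a \<le> E" and bs: "bs \<in> fam (S-{a}) (r-1) (a-1) L" using p pa by auto
  have ne: "bs \<noteq> []" using bs unfolding fam_def asm_def by auto
  have sl: "\<forall>b\<in>set bs. last b < a"
  proof
    fix b assume "b \<in> set bs"
    then have "last b \<le> last (hd bs)" using sorted_last_le_hd[of bs b] bs ne unfolding fam_def asm_def by auto
    also have "\<dots> \<le> a - 1" using bs unfolding fam_def by auto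
    finally show "last b < a" using a(2) by linarith
  qed
  have "[a] # bs \<in> fam S r E L"
    using bs a ne sl assms(4) unfolding fam_def asm_def by auto
  then show "(\<lambda>(a,bs). [a] # bs) p \<in> {bs\<in>fam S r E L. tl (hd bs) = []}" using pa by simp
next
  fix bs assume h: "bs \<in> {bs\<in>fam S r E L. tl (hd bs) = []}"
  then have bs: "bs \<in> fam S r E L" and tl: "tl (hd bs) = []" by auto
  obtain c rest where bsr: "bs = c # rest" using bs unfolding fam_def asm_def by (cases bs) auto
  obtain a where c: "c = [a]" using tl bsr bs unfolding fam_def asm_def by (cases c) auto
  have rne: "rest \<noteq> []"
  proof
    assume "rest = []"
    then have "S = {a}" using bs unfolding fam_def asm_def bsr c by auto
    with assms(3) show False by simp
  qed
  have dist: "distinct (a # concat rest)" using bs unfolding fam_def asm_def bsr c by simp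
  have srt: "\<forall>b\<in>set rest. last b < a" using bs unfolding fam_def asm_def bsr c by auto
  have Ll: "L = last (last rest)" using bs rne unfolding fam_def asm_def bsr by simp
  have "last rest \<in> set rest" using rne by simp
  then have La: "L < a" using srt Ll by auto
  have aE: "a \<le> E" "a \<in> S" using bs unfolding fam_def asm_def bsr c by auto
  have "last (hd rest) < a" using srt rne by simp
  then have "last (hd rest) \<le> a - 1" by simp
  then have "rest \<in> fam (S - {a}) (r-1) (a-1) L"
    using bs dist rne Ll unfolding fam_def asm_def bsr c by auto
  then show "\<exists>p\<in>(SIGMA a:{a\<in>S. L < a \<and> a \<le> E}. fam (S-{a}) (r-1) (a-1) L). bs = (\<lambda>(a,bs). [a] # bs) p"
    using La aE by (intro bexI[of _ "(a, rest)"]) (auto simp: bsr c)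
qed

lemma F2_empty:
  assumes "finite S" "2 \<le> card S"
  shows "{bs\<in>fam S 0 E L. tl (hd bs) = []} = {}"
proof (rule ccontr)
  assume "\<not> ?thesis"
  then obtain bs where bs: "bs \<in> fam S 0 E L" "tl (hd bs) = []" by auto
  obtain c where "bs = [c]" using bs unfolding fam_def asm_def by (cases bs) (auto simp: length_Suc_conv)
  moreover obtain a where "c = [a]" using bs calculation unfolding fam_def asm_def by (cases c) auto
  ultimately have "S = {a}" using bs unfolding fam_def asm_def by auto
  with assms show False by simp
qed

definition G :: "'a::comm_ring_1 \<Rightarrow> 'a \<Rightarrow> nat set \<Rightarrow> nat \<Rightarrow> nat \<Rightarrow> nat \<Rightarrow> nat \<Rightarrow> nat \<Rightarrow> 'a" where
  "G x y S r E H L t = (\<Sum>bs\<in>fam S r E L. x ^ card (lset H (concat bs)) * y ^ card (rset L t (concat bs)))"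

lemma wt_cons:
  fixes x y :: "'a::comm_ring_1"
  assumes "a \<notin> set w"
  shows "x ^ card (lset H (a#w)) * y ^ card (rset L t (a#w)) =
     (if H < a \<and> (\<forall>b\<in>set w. H < b \<longrightarrow> b < a) then x else 1) * (if a < L \<and> t \<le> a then y else 1) *
     (x ^ card (lset H w) * y ^ card (rset L (if a < L then max t (Suc a) else t) w))"
proof -
  have f1: "finite (lset H w)" by (rule finite_subset[OF lset_sub]) simp
  have f2: "finite (rset L t' w)" for t' by (rule finite_subset[OF rset_sub]) simp
  have n1: "a \<notin> lset H w" using lset_sub assms by blast
  have n2: "a \<notin> rset L t' w" for t' using rset_sub assms by blast
  have e1: "x ^ card (lset H (a#w)) = (if H < a \<and> (\<forall>b\<in>set w. H < b \<longrightarrow> b < a) then x else 1) * x ^ card (lset H w)"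
    unfolding lset_Cons using f1 n1 by auto
  have e2: "y ^ card (rset L t (a#w)) = (if a < L \<and> t \<le> a then y else 1) * y ^ card (rset L (if a < L then max t (Suc a) else t) w)"
    unfolding rset_Cons using f2 n2 by auto
  show ?thesis unfolding e1 e2 by (simp add: mult_ac)
qed

lemma wt_cons2:
  fixes x y :: "'a::comm_ring_1"
  assumes "a \<le> H" "L < a"
  shows "x ^ card (lset H (a#w)) * y ^ card (rset L t (a#w)) = x ^ card (lset H w) * y ^ card (rset L t w)"
  using assms unfolding lset_Cons rset_Cons by auto

lemma G_rec:
  fixes x y :: "'a::comm_ring_1"
  assumes fS: "finite S" and cS: "2 \<le> card S" and LS: "L \<in> S" and EH: "E \<le> H"
  shows "G x y S r E H L t =
    (\<Sum>a\<in>S-{L}. (if H < a \<and> (\<forall>b\<in>S-{a}. H < b \<longrightarrow> b < a) then x else 1) * (if a < L \<and> t \<le> a then y else 1)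
        * G x y (S-{a}) r E H L (if a < L then max t (Suc a) else t))
    + (if r = 0 then 0 else (\<Sum>a\<in>{a\<in>S. L < a \<and> a \<le> E}. G x y (S-{a}) (r-1) (a-1) H L t))"
proof -
  define wt where "wt = (\<lambda>t bs. x ^ card (lset H (concat bs)) * y ^ card (rset L t (concat bs)))"
  let ?F1 = "{bs\<in>fam S r E L. tl (hd bs) \<noteq> []}"
  let ?F2 = "{bs\<in>fam S r E L. tl (hd bs) = []}"
  have fin: "finite (fam S r E L)" using fam_finite fS by blast
  have split: "fam S r E L = ?F1 \<union> ?F2" by auto
  have "G x y S r E H L t = sum (wt t) (fam S r E L)" by (simp add: G_def wt_def)
  also have "\<dots> = sum (wt t) ?F1 + sum (wt t) ?F2"
    by (subst split, rule sum.union_disjoint) (use fin in auto)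
  also have "sum (wt t) ?F1 = (\<Sum>p\<in>(SIGMA a:S-{L}. fam (S-{a}) r E L). wt t ((\<lambda>(a,bs). cne a bs) p))"
    using sum.reindex_bij_betw[OF F1_bij[OF LS, of r E], of "wt t"] by simp
  also have "\<dots> = (\<Sum>a\<in>S-{L}. \<Sum>bs\<in>fam (S-{a}) r E L. wt t (cne a bs))"
    by (subst sum.Sigma) (use fS fam_finite in \<open>auto simp: split_beta\<close>)
  also have "\<dots> = (\<Sum>a\<in>S-{L}. (if H < a \<and> (\<forall>b\<in>S-{a}. H < b \<longrightarrow> b < a) then x else 1) * (if a < L \<and> t \<le> a then y else 1)
        * G x y (S-{a}) r E H L (if a < L then max t (Suc a) else t))"
  proof (rule sum.cong[OF refl])
    fix a assume a: "a \<in> S - {L}"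
    have "(\<Sum>bs\<in>fam (S-{a}) r E L. wt t (cne a bs)) = (\<Sum>bs\<in>fam (S-{a}) r E L.
       (if H < a \<and> (\<forall>b\<in>S-{a}. H < b \<longrightarrow> b < a) then x else 1) * (if a < L \<and> t \<le> a then y else 1) *
        wt (if a < L then max t (Suc a) else t) bs)"
    proof (rule sum.cong[OF refl])
      fix bs assume bs: "bs \<in> fam (S-{a}) r E L"
      have ne: "bs \<noteq> []" and st: "set (concat bs) = S - {a}" using bs unfolding fam_def asm_def by auto
      show "wt t (cne a bs) = (if H < a \<and> (\<forall>b\<in>S-{a}. H < b \<longrightarrow> b < a) then x else 1) * (if a < L \<and> t \<le> a then y else 1) *
        wt (if a < L then max t (Suc a) else t) bs"
      proof -
        have na: "a \<notin> set (concat bs)" using st by blast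
        show ?thesis unfolding wt_def concat_cne[OF ne] by (rule wt_cons[OF na, of x H y L t, unfolded st])
      qed
    qed
    then show "(\<Sum>bs\<in>fam (S-{a}) r E L. wt t (cne a bs)) = (if H < a \<and> (\<forall>b\<in>S-{a}. H < b \<longrightarrow> b < a) then x else 1) * (if a < L \<and> t \<le> a then y else 1)
        * G x y (S-{a}) r E H L (if a < L then max t (Suc a) else t)"
      unfolding G_def wt_def by (simp add: sum_distrib_left)
  qed
  also have "sum (wt t) ?F2 = (if r = 0 then 0 else (\<Sum>a\<in>{a\<in>S. L < a \<and> a \<le> E}. G x y (S-{a}) (r-1) (a-1) H L t))"
  proof (cases "r = 0")
    case True
    have e: "?F2 = {}" unfolding True by (rule F2_empty[OF fS cS])
    show ?thesis unfolding e using True by simp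
  next
    case False
    have "sum (wt t) ?F2 = (\<Sum>p\<in>(SIGMA a:{a\<in>S. L < a \<and> a \<le> E}. fam (S-{a}) (r-1) (a-1) L). wt t ((\<lambda>(a,bs). [a] # bs) p))"
      using sum.reindex_bij_betw[OF F2_bij[OF LS fS cS, of r E], of "wt t"] False by simp
    also have "\<dots> = (\<Sum>a\<in>{a\<in>S. L < a \<and> a \<le> E}. \<Sum>bs\<in>fam (S-{a}) (r-1) (a-1) L. wt t ([a] # bs))"
      by (subst sum.Sigma) (use fS fam_finite in \<open>auto simp: split_beta\<close>)
    also have "\<dots> = (\<Sum>a\<in>{a\<in>S. L < a \<and> a \<le> E}. G x y (S-{a}) (r-1) (a-1) H L t)"
    proof (rule sum.cong[OF refl])
      fix a assume a: "a \<in> {a\<in>S. L < a \<and> a \<le> E}"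
      show "(\<Sum>bs\<in>fam (S-{a}) (r-1) (a-1) L. wt t ([a] # bs)) = G x y (S-{a}) (r-1) (a-1) H L t"
        unfolding G_def wt_def by (rule sum.cong[OF refl], simp only: concat.simps append.simps, rule wt_cons2) (use a EH in auto)
    qed
    finally show ?thesis using False by simp
  qed
  finally show ?thesis .
qed

definition K :: "nat \<Rightarrow> nat \<Rightarrow> nat \<Rightarrow> nat \<Rightarrow> nat \<Rightarrow> nat" where
  "K n p q m r = (m choose r) * (fact n div (fact r * fact p * fact q))"

lemma fact_mult_dvd: "fact a * fact b dvd (fact (a + b) :: nat)"
proof -
  have "fact a * fact b * ((a+b) choose a) = (fact (a + b) :: nat)" using binomial_fact_lemma[of a "a+b"] by simp
  then show ?thesis by (metis dvd_triv_left)
qed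

lemma fact3_dvd: "r + p + q \<le> n \<Longrightarrow> fact r * fact p * fact q dvd (fact n :: nat)"
proof -
  assume h: "r + p + q \<le> n"
  have "fact r * fact p * fact q dvd fact (r + p) * (fact q :: nat)"
    using fact_mult_dvd[of r p] by (simp add: mult_dvd_mono)
  also have "\<dots> dvd fact (r + p + q)" by (rule fact_mult_dvd)
  also have "\<dots> dvd fact n" using h by (rule fact_dvd)
  finally show ?thesis .
qed

lemma K_mul: "m + p + q \<le> n \<Longrightarrow> K n p q m r * (fact r * fact p * fact q) = (m choose r) * fact n"
proof (cases "r \<le> m")
  case True
  assume h: "m + p + q \<le> n"
  then have "fact r * fact p * fact q dvd (fact n :: nat)" using True by (intro fact3_dvd) simp
  then show ?thesis unfolding K_def by (simp add: mult.assoc)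
next
  case False
  then show ?thesis unfolding K_def by simp
qed

lemma D_pos: "(0::nat) < fact r * fact p * fact q" by simp

lemma K_shift:
  assumes "m + p + Suc i \<le> n"
  shows "K n p i m r = Suc i * K n p (Suc i) m r"
proof -
  have a: "K n p i m r * (fact r * fact p * fact i) = (m choose r) * fact n" using assms by (intro K_mul) simp
  have b: "K n p (Suc i) m r * (fact r * fact p * fact (Suc i)) = (m choose r) * fact n" using assms by (intro K_mul) simp
  have "K n p i m r * (fact r * fact p * fact i) = (Suc i * K n p (Suc i) m r) * (fact r * fact p * fact i)"
    using a b by (simp only: fact_Suc) (metis (no_types, lifting) mult.assoc mult.left_commute of_nat_id)
  then show "K n p i m r = Suc i * K n p (Suc i) m r"
    using D_pos[of r p i] by (simp only: mult_right_cancel)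
qed

lemma K_rec:
  assumes nsum: "n = p + q + m + g + ql" and n1: "1 \<le> n"
  shows "K n p q m r = (if 0 < p then K (n-1) (p-1) q m r else 0) + g * K (n-1) p q m r
     + m * K (n-1) p q (m-1) r + ql * K (n-1) p q m r + (if 0 < q then K (n-1) p (q-1) m r else 0)
     + (if 0 < r then (\<Sum>j<m. K (n-1) p q j (r-1)) else 0)"
proof -
  define D where "D = fact r * fact p * (fact q :: nat)"
  define C where "C = m choose r"
  define F where "F = (fact (n - 1) :: nat)"
  have t1: "(if 0 < p then K (n-1) (p-1) q m r else 0) * D = p * C * F"
  proof (cases p)
    case 0 then show ?thesis by simp
  next
    case (Suc p')
    have "K (n-1) p' q m r * (fact r * fact p' * fact q) = C * F"
      unfolding C_def F_def using nsum Suc by (intro K_mul) simp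
    then show ?thesis unfolding D_def using Suc by (simp add: fact_Suc algebra_simps)
  qed
  have t2: "g * K (n-1) p q m r * D = g * C * F" if "g' = g" for g'
  proof (cases "g = 0")
    case True then show ?thesis by simp
  next
    case False
    have "K (n-1) p q m r * D = C * F"
      unfolding C_def F_def D_def using nsum False by (intro K_mul) simp
    then show ?thesis by (simp add: algebra_simps)
  qed
  have t4: "ql * K (n-1) p q m r * D = ql * C * F"
  proof (cases "ql = 0")
    case True then show ?thesis by simp
  next
    case False
    have "K (n-1) p q m r * D = C * F"
      unfolding C_def F_def D_def using nsum False by (intro K_mul) simp
    then show ?thesis by (simp add: algebra_simps)
  qed
  have t3: "m * K (n-1) p q (m-1) r * D = (m - r) * C * F"
  proof (cases m)
    case 0 then show ?thesis by simp
  next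
    case (Suc m')
    have "K (n-1) p q m' r * D = (m' choose r) * F"
      unfolding F_def D_def using nsum Suc by (intro K_mul) simp
    moreover have "(m - r) * C = m * (m' choose r)" unfolding C_def using binomial_absorb_comp[of m r] Suc by simp
    ultimately show ?thesis using Suc by (simp add: algebra_simps)
  qed
  have t5: "(if 0 < q then K (n-1) p (q-1) m r else 0) * D = q * C * F"
  proof (cases q)
    case 0 then show ?thesis by simp
  next
    case (Suc q')
    have "K (n-1) p q' m r * (fact r * fact p * fact q') = C * F"
      unfolding C_def F_def using nsum Suc by (intro K_mul) simp
    then show ?thesis unfolding D_def using Suc by (simp add: fact_Suc algebra_simps)
  qed
  have t6: "(if 0 < r then (\<Sum>j<m. K (n-1) p q j (r-1)) else 0) * D = r * C * F"
  proof (cases r)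
    case 0 then show ?thesis by simp
  next
    case (Suc r')
    have "(\<Sum>j<m. K (n-1) p q j r') * D = (\<Sum>j<m. K (n-1) p q j r' * D)" by (simp add: sum_distrib_right)
    also have "\<dots> = (\<Sum>j<m. r * (j choose r') * F)"
    proof (rule sum.cong[OF refl])
      fix j assume j: "j \<in> {..<m}"
      have "K (n-1) p q j r' * (fact r' * fact p * fact q) = (j choose r') * F"
        unfolding F_def using nsum j by (intro K_mul) auto
      then show "K (n-1) p q j r' * D = r * (j choose r') * F" unfolding D_def using Suc
        by (simp add: fact_Suc algebra_simps)
    qed
    also have "\<dots> = r * (\<Sum>j<m. j choose r') * F" by (simp add: sum_distrib_left sum_distrib_right mult.assoc)
    also have "(\<Sum>j<m. j choose r') = C"
    proof (cases m)
      case 0 then show ?thesis unfolding C_def using Suc by simp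
    next
      case (Suc m')
      have "(\<Sum>j<m. j choose r') = (\<Sum>j\<le>m'. j choose r')" using Suc lessThan_Suc_atMost by simp
      also have "\<dots> = Suc m' choose Suc r'" by (rule sum_choose_upper)
      finally show ?thesis unfolding C_def using Suc \<open>r = Suc r'\<close> by simp
    qed
    finally show ?thesis using Suc by simp
  qed
  have tot: "(p * C * F) + g * C * F + (m - r) * C * F + ql * C * F + q * C * F + r * C * F = C * fact n"
  proof (cases "r \<le> m")
    case True
    have "(p * C * F) + g * C * F + (m - r) * C * F + ql * C * F + q * C * F + r * C * F
        = (p + g + (m - r) + ql + q + r) * C * F" by (simp add: algebra_simps)
    also have "p + g + (m - r) + ql + q + r = n" using True nsum by simp
    also have "n * C * F = C * fact n" unfolding F_def using n1
      by (metis (no_types, lifting) Suc_diff_1 fact_Suc le_numeral_extra(2) less_le_trans mult.commute mult.left_commute of_nat_id zero_less_one)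
    finally show ?thesis .
  next
    case False
    then have "C = 0" unfolding C_def by simp
    then show ?thesis by simp
  qed
  have "K n p q m r * D = C * fact n" unfolding C_def D_def using nsum by (intro K_mul) simp
  also have "\<dots> = ((if 0 < p then K (n-1) (p-1) q m r else 0) + g * K (n-1) p q m r
     + m * K (n-1) p q (m-1) r + ql * K (n-1) p q m r + (if 0 < q then K (n-1) p (q-1) m r else 0)
     + (if 0 < r then (\<Sum>j<m. K (n-1) p q j (r-1)) else 0)) * D"
    unfolding distrib_right t1 t2[OF refl] t3 t4 t5 t6 tot[symmetric] ..
  finally show ?thesis using D_pos[of r p q] unfolding D_def by (simp only: mult_right_cancel)
qed

lemma poch_sum:
  fixes y :: "'a::comm_ring_1"
  assumes "\<forall>i<q. c i = Suc i * c (Suc i)"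
  shows "(\<Sum>i<Suc q. y * of_nat (c i) * pochhammer y i) = of_nat (c q) * pochhammer y (Suc q)"
  using assms
proof (induction q)
  case 0 then show ?case by simp
next
  case (Suc q)
  have h: "c q = Suc q * c (Suc q)" using Suc.prems by simp
  have "(\<Sum>i<Suc (Suc q). y * of_nat (c i) * pochhammer y i)
     = of_nat (c q) * pochhammer y (Suc q) + y * of_nat (c (Suc q)) * pochhammer y (Suc q)"
    using Suc by simp
  also have "\<dots> = of_nat (c (Suc q)) * pochhammer y (Suc (Suc q))"
    unfolding h pochhammer_Suc[of y "Suc q"] by (simp add: algebra_simps)
  finally show ?case .
qed

lemma max_sum:
  fixes x :: "'a::comm_ring_1" and P :: "nat set"
  assumes "finite P" "P \<noteq> {}"
  shows "(\<Sum>a\<in>P. if (\<forall>b\<in>P-{a}. b < a) then x else 1) = x + of_nat (card P - 1)"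
proof -
  define M where "M = Max P"
  have MP: "M \<in> P" unfolding M_def using assms by simp
  have Mg: "\<forall>b\<in>P-{M}. b < M" unfolding M_def using assms by (simp add: order.not_eq_order_implies_strict)
  have nM: "\<not> (\<forall>b\<in>P-{a}. b < (a::nat))" if "a \<in> P - {M}" for a
  proof -
    have "M \<in> P - {a}" using that MP by auto
    moreover have "a < M" using that Mg by blast
    then have "\<not> M < a" by simp
    ultimately show ?thesis by blast
  qed
  have "(\<Sum>a\<in>P. if (\<forall>b\<in>P-{a}. b < a) then x else 1) =
      (if (\<forall>b\<in>P-{M}. b < M) then x else 1) + (\<Sum>a\<in>P-{M}. if (\<forall>b\<in>P-{a}. b < a) then x else 1)"
    using assms MP by (simp add: sum.remove)
  also have "(\<Sum>a\<in>P-{M}. if (\<forall>b\<in>P-{a}. b < a) then x else 1) = (\<Sum>a\<in>P-{M}. 1)"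
    by (rule sum.cong[OF refl]) (use nM in auto)
  finally show ?thesis using Mg assms MP by (simp add: card_Diff_singleton del: Diff_iff insert_Diff_single)
qed

lemma rank_sum_less:
  fixes A :: "nat set"
  assumes "finite A"
  shows "(\<Sum>a\<in>A. f (card {s\<in>A. s < a})) = (\<Sum>i<card A. f i)"
  using assms
proof (induction "card A" arbitrary: A)
  case 0 then show ?case by simp
next
  case (Suc k)
  have ne: "A \<noteq> {}" using Suc.hyps(2) by auto
  define M where "M = Max A"
  have MA: "M \<in> A" unfolding M_def using ne Suc.prems by simp
  have Mg: "\<forall>b\<in>A-{M}. b < M" unfolding M_def using ne Suc.prems by (simp add: order.not_eq_order_implies_strict)
  let ?A = "A - {M}"
  have cA: "card ?A = k" using Suc.hyps(2) MA Suc.prems by simp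
  have s1: "{s\<in>A. s < M} = ?A" using Mg by auto
  have s2: "{s\<in>A. s < a} = {s\<in>?A. s < a}" if "a \<in> ?A" for a
  proof -
    have "a < M" using that Mg by blast
    then show ?thesis by auto
  qed
  have "(\<Sum>a\<in>A. f (card {s\<in>A. s < a})) = f (card {s\<in>A. s < M}) + (\<Sum>a\<in>?A. f (card {s\<in>A. s < a}))"
    using Suc.prems MA by (simp add: sum.remove)
  also have "(\<Sum>a\<in>?A. f (card {s\<in>A. s < a})) = (\<Sum>a\<in>?A. f (card {s\<in>?A. s < a}))"
    by (rule sum.cong[OF refl]) (simp add: s2)
  also have "\<dots> = (\<Sum>i<k. f i)" using Suc.hyps(1)[of ?A] cA Suc.prems by simp
  finally show ?case using s1 cA Suc.hyps(2)[symmetric] by (simp add: add.commute)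
qed

lemma rank_sum_gt:
  fixes A :: "nat set"
  assumes "finite A"
  shows "(\<Sum>a\<in>A. f (card {s\<in>A. a < s})) = (\<Sum>i<card A. f i)"
  using assms
proof (induction "card A" arbitrary: A)
  case 0 then show ?case by simp
next
  case (Suc k)
  have ne: "A \<noteq> {}" using Suc.hyps(2) by auto
  define M where "M = Min A"
  have MA: "M \<in> A" unfolding M_def using ne Suc.prems by simp
  have Mg: "\<forall>b\<in>A-{M}. M < b" unfolding M_def using ne Suc.prems by (simp add: order.not_eq_order_implies_strict)
  let ?A = "A - {M}"
  have cA: "card ?A = k" using Suc.hyps(2) MA Suc.prems by simp
  have s1: "{s\<in>A. M < s} = ?A" using Mg by auto
  have s2: "{s\<in>A. a < s} = {s\<in>?A. a < s}" if "a \<in> ?A" for a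
  proof -
    have "M < a" using that Mg by blast
    then show ?thesis by auto
  qed
  have "(\<Sum>a\<in>A. f (card {s\<in>A. a < s})) = f (card {s\<in>A. M < s}) + (\<Sum>a\<in>?A. f (card {s\<in>A. a < s}))"
    using Suc.prems MA by (simp add: sum.remove)
  also have "(\<Sum>a\<in>?A. f (card {s\<in>A. a < s})) = (\<Sum>a\<in>?A. f (card {s\<in>?A. a < s}))"
    by (rule sum.cong[OF refl]) (simp add: s2)
  also have "\<dots> = (\<Sum>i<k. f i)" using Suc.hyps(1)[of ?A] cA Suc.prems by simp
  finally show ?case using s1 cA Suc.hyps(2)[symmetric] by (simp add: add.commute)
qed

definition Gc :: "'a::comm_ring_1 \<Rightarrow> 'a \<Rightarrow> nat set \<Rightarrow> nat \<Rightarrow> nat \<Rightarrow> nat \<Rightarrow> nat \<Rightarrow> nat \<Rightarrow> 'a" where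
  "Gc x y S r E H L t = of_nat (K (card S - 1) (card {s\<in>S. H < s}) (card {s\<in>S. t \<le> s \<and> s < L})
      (card {s\<in>S. L < s \<and> s \<le> E}) r) * pochhammer x (card {s\<in>S. H < s}) * pochhammer y (card {s\<in>S. t \<le> s \<and> s < L})"

lemma fam_single: "fam {L} r E L = (if r = 0 \<and> L \<le> E then {[[L]]} else {})"
proof -
  have "bs = [[L]] \<and> r = 0" if bs: "bs \<in> asm {L} (Suc r)" for bs
  proof -
    have d: "distinct (concat bs)" "set (concat bs) = {L}" using bs unfolding asm_def by auto
    have c: "concat bs = [L]"
    proof -
      have "card (set (concat bs)) = length (concat bs)" using d(1) by (rule distinct_card)
      then have "length (concat bs) = 1" using d(2) by simp
      then obtain z where "concat bs = [z]" by (cases "concat bs") auto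
      then show ?thesis using d(2) by simp
    qed
    obtain b rest where br: "bs = b # rest" using bs unfolding asm_def by (cases bs) auto
    have bne: "b \<noteq> []" and rne: "\<forall>c\<in>set rest. c \<noteq> []" using bs br unfolding asm_def by auto
    have cc: "b @ concat rest = [L]" using c br by simp
    then have "b = [L]" using bne by (cases b) auto
    then have "concat rest = []" using cc by simp
    then have "rest = []" using rne by (cases rest) auto
    with \<open>b = [L]\<close> br bs show ?thesis unfolding asm_def by auto
  qed
  note X = this
  have Y: "[[L]] \<in> asm {L} (Suc 0)" unfolding asm_def by auto
  show ?thesis
  proof (cases "r = 0 \<and> L \<le> E")
    case True
    show ?thesis
    proof (rule set_eqI, rule iffI)
      fix bs assume "bs \<in> fam {L} r E L"
      then have "bs \<in> asm {L} (Suc r)" unfolding fam_def by blast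
      then show "bs \<in> (if r = 0 \<and> L \<le> E then {[[L]]} else {})" using X True by simp
    next
      fix bs assume "bs \<in> (if r = 0 \<and> L \<le> E then {[[L]]} else {})"
      then have "bs = [[L]]" using True by simp
      then show "bs \<in> fam {L} r E L" unfolding fam_def using Y True by simp
    qed
  next
    case False
    have "bs \<notin> fam {L} r E L" for bs
    proof
      assume "bs \<in> fam {L} r E L"
      then have a: "bs \<in> asm {L} (Suc r)" "last (hd bs) \<le> E" unfolding fam_def by auto
      then have "bs = [[L]] \<and> r = 0" using X by blast
      with a False show False by simp
    qed
    then show ?thesis using False by auto
  qed
qed

lemma G_base:
  fixes x y :: "'a::comm_ring_1"
  assumes "L \<le> E" "E \<le> H"
  shows "G x y {L} r E H L t = Gc x y {L} r E H L t"
proof -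
  have e1: "{s\<in>{L}. H < s} = {}" "{s\<in>{L}. t \<le> s \<and> s < L} = {}" "{s\<in>{L}. L < s \<and> s \<le> E} = {}"
    using assms by auto
  have l: "lset H [L] = {}" using assms unfolding lset_Cons by auto
  have r: "rset L t [L] = {}" unfolding rset_Cons by auto
  show ?thesis unfolding G_def Gc_def fam_single e1 using assms l r by (cases r) (auto simp: K_def)
qed

lemma sum_Un5:
  assumes "finite A" "finite B" "finite C" "finite D" "finite F"
    "A \<inter> B = {}" "A \<inter> C = {}" "A \<inter> D = {}" "A \<inter> F = {}" "B \<inter> C = {}" "B \<inter> D = {}" "B \<inter> F = {}"
    "C \<inter> D = {}" "C \<inter> F = {}" "D \<inter> F = {}"
  shows "sum f (A \<union> B \<union> C \<union> D \<union> F) = sum f A + sum f B + sum f C + sum f D + sum f F"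
  using assms by (simp add: sum.union_disjoint Int_Un_distrib Int_Un_distrib2)

lemma card_Un5:
  assumes "finite A" "finite B" "finite C" "finite D" "finite F"
    "A \<inter> B = {}" "A \<inter> C = {}" "A \<inter> D = {}" "A \<inter> F = {}" "B \<inter> C = {}" "B \<inter> D = {}" "B \<inter> F = {}"
    "C \<inter> D = {}" "C \<inter> F = {}" "D \<inter> F = {}"
  shows "card (A \<union> B \<union> C \<union> D \<union> F) = card A + card B + card C + card D + card F"
  using assms by (simp add: card_Un_disjoint Int_Un_distrib Int_Un_distrib2)

lemma G_step:
  fixes x y :: "'a::comm_ring_1"
  assumes IH: "\<And>S' r E H L t. card S' = Suc n \<Longrightarrow> finite S' \<Longrightarrow> L \<in> S' \<Longrightarrow> t \<le> L \<Longrightarrow> L \<le> E \<Longrightarrow> E \<le> H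
      \<Longrightarrow> G x y S' r E H L t = Gc x y S' r E H L t"
  and cS: "card S = Suc (Suc n)" and fS: "finite S" and LS: "L \<in> S" and tL: "t \<le> L"
  and LE: "L \<le> E" and EH: "E \<le> H"
  shows "G x y S r E H L t = Gc x y S r E H L t"
proof -
  define P where "P = {s\<in>S. H < s}"
  define Q where "Q = {s\<in>S. t \<le> s \<and> s < L}"
  define M where "M = {s\<in>S. L < s \<and> s \<le> E}"
  define Gp where "Gp = {s\<in>S. E < s \<and> s \<le> H}"
  define Ql where "Ql = {s\<in>S. s < t}"
  define p where "p = card P"
  define q where "q = card Q"
  define m where "m = card M"
  define g where "g = card Gp"
  define ql where "ql = card Ql"
  define X where "X = pochhammer x p * pochhammer y q"
  have fP: "finite P" unfolding P_def using fS by simp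
  have fQ: "finite Q" unfolding Q_def using fS by simp
  have fM: "finite M" unfolding M_def using fS by simp
  have fGp: "finite Gp" unfolding Gp_def using fS by simp
  have fQl: "finite Ql" unfolding Ql_def using fS by simp
  have part: "S - {L} = P \<union> Gp \<union> M \<union> Q \<union> Ql"
    unfolding P_def Gp_def M_def Q_def Ql_def using tL LE EH by auto
  have dj: "P \<inter> Gp = {}" "P \<inter> M = {}" "P \<inter> Q = {}" "P \<inter> Ql = {}" "Gp \<inter> M = {}" "Gp \<inter> Q = {}"
    "Gp \<inter> Ql = {}" "M \<inter> Q = {}" "M \<inter> Ql = {}" "Q \<inter> Ql = {}"
    unfolding P_def Gp_def M_def Q_def Ql_def using tL LE EH by auto
  have N: "Suc n = p + g + m + q + ql"
  proof -
    have "card (S - {L}) = Suc n" using cS LS fS by simp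
    then show ?thesis unfolding part p_def g_def m_def q_def ql_def
      using card_Un5[OF fP fGp fM fQ fQl dj] by simp
  qed
  have cSa: "card (S - {a}) = Suc n" "finite (S - {a})" if "a \<in> S" for a using that cS fS by auto
  define T where "T a = (if H < a \<and> (\<forall>b\<in>S-{a}. H < b \<longrightarrow> b < a) then x else 1) * (if a < L \<and> t \<le> a then y else 1)
        * G x y (S-{a}) r E H L (if a < L then max t (Suc a) else t)" for a
  have rec: "G x y S r E H L t = sum T (S-{L}) + (if r = 0 then 0 else (\<Sum>a\<in>M. G x y (S-{a}) (r-1) (a-1) H L t))"
    unfolding T_def M_def by (rule G_rec[OF fS _ LS EH]) (use cS in simp)
  have TP: "T a = (if \<forall>b\<in>P-{a}. b < a then x else 1) * (of_nat (K n (p-1) q m r) * pochhammer x (p-1) * pochhammer y q)"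
    if a: "a \<in> P" for a
  proof -
    have aS: "a \<in> S" "H < a" using a unfolding P_def by auto
    have c1: "(\<forall>b\<in>S-{a}. H < b \<longrightarrow> b < a) \<longleftrightarrow> (\<forall>b\<in>P-{a}. b < a)" unfolding P_def by auto
    have c2: "\<not> a < L" using aS LE EH by simp
    have LSa: "L \<in> S - {a}" using LS aS LE EH by auto
    have s1: "{s\<in>S-{a}. H < s} = P - {a}" unfolding P_def by auto
    have s2: "{s\<in>S-{a}. t \<le> s \<and> s < L} = Q" unfolding Q_def using aS LE EH by auto
    have s3: "{s\<in>S-{a}. L < s \<and> s \<le> E} = M" unfolding M_def using aS LE EH by auto
    have cP: "card (P - {a}) = p - 1" unfolding p_def using a fP by simp
    have "G x y (S-{a}) r E H L t = Gc x y (S-{a}) r E H L t"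
      using IH[OF cSa[OF aS(1)] LSa tL LE EH] .
    also have "\<dots> = of_nat (K n (p-1) q m r) * pochhammer x (p-1) * pochhammer y q"
      unfolding Gc_def s1 s2 s3 cP cSa(1)[OF aS(1)] q_def m_def by simp
    finally show ?thesis unfolding T_def using c1 c2 aS by simp
  qed
  have SP: "sum T P = of_nat (if 0 < p then K n (p-1) q m r else 0) * X"
  proof (cases "P = {}")
    case True
    then show ?thesis unfolding p_def by simp
  next
    case False
    then obtain p' where pp: "p = Suc p'" unfolding p_def using fP by (cases "card P") auto
    have "sum T P = (\<Sum>a\<in>P. (if \<forall>b\<in>P-{a}. b < a then x else 1)) * (of_nat (K n (p-1) q m r) * pochhammer x (p-1) * pochhammer y q)"
      using TP by (simp add: sum_distrib_right)
    also have "(\<Sum>a\<in>P. (if \<forall>b\<in>P-{a}. b < a then x else 1)) = x + of_nat p'"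
      using max_sum[OF fP False, of x] pp unfolding p_def by simp
    finally show ?thesis unfolding X_def pp by (simp add: pochhammer_Suc algebra_simps)
  qed
  have TG: "T a = of_nat (K n p q m r) * X" if a: "a \<in> Gp" for a
  proof -
    have aS: "a \<in> S" "E < a" "a \<le> H" using a unfolding Gp_def by auto
    have LSa: "L \<in> S - {a}" using LS aS LE EH by auto
    have s1: "{s\<in>S-{a}. H < s} = P" unfolding P_def using aS by auto
    have s2: "{s\<in>S-{a}. t \<le> s \<and> s < L} = Q" unfolding Q_def using aS LE EH by auto
    have s3: "{s\<in>S-{a}. L < s \<and> s \<le> E} = M" unfolding M_def using aS LE EH by auto
    have "G x y (S-{a}) r E H L t = Gc x y (S-{a}) r E H L t"
      using IH[OF cSa[OF aS(1)] LSa tL LE EH] .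
    also have "\<dots> = of_nat (K n p q m r) * X"
      unfolding Gc_def s1 s2 s3 cSa(1)[OF aS(1)] p_def q_def m_def X_def by simp
    finally show ?thesis unfolding T_def using aS LE EH by simp
  qed
  have SG: "sum T Gp = of_nat (g * K n p q m r) * X"
    using TG unfolding g_def by simp
  have TM: "T a = of_nat (K n p q (m-1) r) * X" if a: "a \<in> M" for a
  proof -
    have aS: "a \<in> S" "L < a" "a \<le> E" using a unfolding M_def by auto
    have LSa: "L \<in> S - {a}" using LS aS by auto
    have s1: "{s\<in>S-{a}. H < s} = P" unfolding P_def using aS EH by auto
    have s2: "{s\<in>S-{a}. t \<le> s \<and> s < L} = Q" unfolding Q_def using aS by auto
    have s3: "{s\<in>S-{a}. L < s \<and> s \<le> E} = M - {a}" unfolding M_def by auto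
    have cM: "card (M - {a}) = m - 1" unfolding m_def using a fM by simp
    have "G x y (S-{a}) r E H L t = Gc x y (S-{a}) r E H L t"
      using IH[OF cSa[OF aS(1)] LSa tL LE EH] .
    also have "\<dots> = of_nat (K n p q (m-1) r) * X"
      unfolding Gc_def s1 s2 s3 cM cSa(1)[OF aS(1)] p_def q_def X_def by simp
    finally show ?thesis unfolding T_def using aS LE EH by simp
  qed
  have SM: "sum T M = of_nat (m * K n p q (m-1) r) * X"
    using TM unfolding m_def by simp
  have TL: "T a = of_nat (K n p q m r) * X" if a: "a \<in> Ql" for a
  proof -
    have aS: "a \<in> S" "a < t" using a unfolding Ql_def by auto
    have LSa: "L \<in> S - {a}" using LS aS tL by auto
    have mx: "max t (Suc a) = t" using aS by simp
    have s1: "{s\<in>S-{a}. H < s} = P" unfolding P_def using aS tL LE EH by auto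
    have s2: "{s\<in>S-{a}. t \<le> s \<and> s < L} = Q" unfolding Q_def using aS by auto
    have s3: "{s\<in>S-{a}. L < s \<and> s \<le> E} = M" unfolding M_def using aS tL by auto
    have "G x y (S-{a}) r E H L t = Gc x y (S-{a}) r E H L t"
      using IH[OF cSa[OF aS(1)] LSa tL LE EH] .
    also have "\<dots> = of_nat (K n p q m r) * X"
      unfolding Gc_def s1 s2 s3 cSa(1)[OF aS(1)] p_def q_def m_def X_def by simp
    finally show ?thesis unfolding T_def using aS tL LE EH mx by simp
  qed
  have SL: "sum T Ql = of_nat (ql * K n p q m r) * X"
    using TL unfolding ql_def by simp
  have TQ: "T a = y * (of_nat (K n p (card {s\<in>Q. a < s}) m r) * pochhammer x p * pochhammer y (card {s\<in>Q. a < s}))"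
    if a: "a \<in> Q" for a
  proof -
    have aS: "a \<in> S" "t \<le> a" "a < L" using a unfolding Q_def by auto
    have LSa: "L \<in> S - {a}" using LS aS by auto
    have mx: "max t (Suc a) = Suc a" using aS by simp
    have tL': "Suc a \<le> L" using aS by simp
    have s1: "{s\<in>S-{a}. H < s} = P" unfolding P_def using aS LE EH by auto
    have s2: "{s\<in>S-{a}. Suc a \<le> s \<and> s < L} = {s\<in>Q. a < s}" unfolding Q_def using aS by auto
    have s3: "{s\<in>S-{a}. L < s \<and> s \<le> E} = M" unfolding M_def using aS by auto
    have "G x y (S-{a}) r E H L (Suc a) = Gc x y (S-{a}) r E H L (Suc a)"
      using IH[OF cSa[OF aS(1)] LSa tL' LE EH] .
    also have "\<dots> = of_nat (K n p (card {s\<in>Q. a < s}) m r) * pochhammer x p * pochhammer y (card {s\<in>Q. a < s})"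
      unfolding Gc_def s1 s2 s3 cSa(1)[OF aS(1)] p_def m_def by simp
    finally show ?thesis unfolding T_def using aS LE EH mx by simp
  qed
  have SQ: "sum T Q = of_nat (if 0 < q then K n p (q-1) m r else 0) * X"
  proof -
    have "sum T Q = (\<Sum>a\<in>Q. y * (of_nat (K n p (card {s\<in>Q. a < s}) m r) * pochhammer x p * pochhammer y (card {s\<in>Q. a < s})))"
      using TQ by simp
    also have "\<dots> = (\<Sum>i<q. y * (of_nat (K n p i m r) * pochhammer x p * pochhammer y i))"
      unfolding q_def by (rule rank_sum_gt[OF fQ, of "\<lambda>i. y * (of_nat (K n p i m r) * pochhammer x p * pochhammer y i)"])
    also have "\<dots> = pochhammer x p * (\<Sum>i<q. y * of_nat (K n p i m r) * pochhammer y i)"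
      by (simp add: sum_distrib_left algebra_simps)
    also have "\<dots> = of_nat (if 0 < q then K n p (q-1) m r else 0) * X"
    proof (cases q)
      case 0 then show ?thesis by simp
    next
      case (Suc q')
      have "\<forall>i<q'. K n p i m r = Suc i * K n p (Suc i) m r"
      proof (intro allI impI)
        fix i assume "i < q'"
        then have "m + p + Suc i \<le> n" using N Suc by simp
        then show "K n p i m r = Suc i * K n p (Suc i) m r" by (rule K_shift)
      qed
      then have "(\<Sum>i<Suc q'. y * of_nat (K n p i m r) * pochhammer y i) = of_nat (K n p q' m r) * pochhammer y (Suc q')"
        by (rule poch_sum)
      then show ?thesis unfolding X_def Suc by simp
    qed
    finally show ?thesis .
  qed
  have TS: "G x y (S-{a}) (r-1) (a-1) H L t = of_nat (K n p q (card {s\<in>M. s < a}) (r-1)) * X" if a: "a \<in> M" for a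
  proof -
    have aS: "a \<in> S" "L < a" "a \<le> E" using a unfolding M_def by auto
    have LSa: "L \<in> S - {a}" using LS aS by auto
    have La: "L \<le> a - 1" "a - 1 \<le> H" using aS EH by auto
    have s1: "{s\<in>S-{a}. H < s} = P" unfolding P_def using aS EH by auto
    have s2: "{s\<in>S-{a}. t \<le> s \<and> s < L} = Q" unfolding Q_def using aS by auto
    have s3: "{s\<in>S-{a}. L < s \<and> s \<le> a - 1} = {s\<in>M. s < a}" unfolding M_def using aS by auto
    have "G x y (S-{a}) (r-1) (a-1) H L t = Gc x y (S-{a}) (r-1) (a-1) H L t"
      using IH[OF cSa[OF aS(1)] LSa tL La] .
    also have "\<dots> = of_nat (K n p q (card {s\<in>M. s < a}) (r-1)) * X"
      unfolding Gc_def s1 s2 s3 cSa(1)[OF aS(1)] p_def q_def X_def by simp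
    finally show ?thesis .
  qed
  have SS: "(\<Sum>a\<in>M. G x y (S-{a}) (r-1) (a-1) H L t) = of_nat (\<Sum>j<m. K n p q j (r-1)) * X"
  proof -
    have "(\<Sum>a\<in>M. G x y (S-{a}) (r-1) (a-1) H L t) = (\<Sum>a\<in>M. of_nat (K n p q (card {s\<in>M. s < a}) (r-1)) * X)"
      using TS by simp
    also have "\<dots> = (\<Sum>j<m. of_nat (K n p q j (r-1)) * X)"
      unfolding m_def by (rule rank_sum_less[OF fM, of "\<lambda>j. of_nat (K n p q j (r-1)) * X"])
    finally show ?thesis by (simp add: sum_distrib_right)
  qed
  have KR: "K (Suc n) p q m r = (if 0 < p then K n (p-1) q m r else 0) + g * K n p q m r
     + m * K n p q (m-1) r + ql * K n p q m r + (if 0 < q then K n p (q-1) m r else 0)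
     + (if 0 < r then (\<Sum>j<m. K n p q j (r-1)) else 0)"
  proof -
    have N2: "Suc n = p + q + m + g + ql" using N by linarith
    show ?thesis using K_rec[OF N2] by simp
  qed
  have "G x y S r E H L t = sum T P + sum T Gp + sum T M + sum T Q + sum T Ql
      + (if r = 0 then 0 else (\<Sum>a\<in>M. G x y (S-{a}) (r-1) (a-1) H L t))"
    unfolding rec part by (simp only: sum_Un5[OF fP fGp fM fQ fQl dj])
  also have "\<dots> = of_nat (K (Suc n) p q m r) * X"
    unfolding SP SG SM SQ SL SS KR by (simp add: algebra_simps)
  also have "\<dots> = Gc x y S r E H L t"
    unfolding Gc_def X_def p_def q_def m_def P_def Q_def M_def using cS by simp
  finally show ?thesis .
qed

theorem G_closed:
  fixes x y :: "'a::comm_ring_1"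
  assumes "finite S" "L \<in> S" "t \<le> L" "L \<le> E" "E \<le> H"
  shows "G x y S r E H L t = Gc x y S r E H L t"
proof -
  obtain n where cn: "card S = Suc n" using assms(1,2) by (cases "card S") auto
  have "\<forall>S r E H L t. card S = Suc n \<longrightarrow> finite S \<longrightarrow> L \<in> S \<longrightarrow> t \<le> L \<longrightarrow> L \<le> E \<longrightarrow> E \<le> H
      \<longrightarrow> G x y S r E H L t = Gc x y S r E H L t"
  proof (induction n)
    case 0
    show ?case
    proof (intro allI impI)
      fix S :: "nat set" and r E H L t :: nat assume h: "card S = Suc 0" "finite S" "L \<in> S" "t \<le> L" "L \<le> E" "E \<le> H"
      then have "card S = 1" by simp
      then obtain a where "S = {a}" by (rule card_1_singletonE)
      then have "S = {L}" using h(3) by simp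
      then show "G x y S r E H L t = Gc x y S r E H L t" using G_base h by simp
    qed
  next
    case (Suc n)
    show ?case
    proof (intro allI impI)
      fix S :: "nat set" and r E H L t :: nat assume h: "card S = Suc (Suc n)" "finite S" "L \<in> S" "t \<le> L" "L \<le> E" "E \<le> H"
      show "G x y S r E H L t = Gc x y S r E H L t"
        by (rule G_step[OF Suc.IH[rule_format] h])
    qed
  qed
  then show ?thesis using cn assms by simp
qed

lemma poch_nat_choose: "pochhammer (Suc a) k = ((a + k) choose k) * fact k"
proof (induction k)
  case 0 then show ?case by simp
next
  case (Suc k)
  have "pochhammer (Suc a) (Suc k) = pochhammer (Suc a) k * (Suc a + k)"
    by (simp add: pochhammer_Suc)
  also have "\<dots> = (Suc (a + k) * ((a + k) choose k)) * fact k" using Suc by (simp add: algebra_simps)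
  also have "Suc (a + k) * ((a + k) choose k) = (Suc (a + k) choose Suc k) * Suc k"
    by (rule Suc_times_binomial_eq)
  finally show ?case by (simp add: fact_Suc algebra_simps del: binomial_Suc_Suc)
qed

lemma coef_id:
  assumes ps: "p + q \<le> n" and rn: "r \<le> n"
  shows "K n p q (n - p - q) r = (if 0 < n - p - q then K n p q (n - p - q - 1) r else 0)
     + (if p + q \<le> n - r then (n choose r) * ((n - r) choose (p + q)) * ((p + q) choose p) * pochhammer r (n - r - (p + q)) else 0)"
proof -
  define m where "m = n - p - q"
  define s where "s = p + q"
  have fpq: "fact p * fact q * (s choose p) = (fact s :: nat)"
    using binomial_fact_lemma[of p s] unfolding s_def by simp
  show ?thesis
  proof (cases "r = 0")
    case True
    have Kr0: "K n p q j 0 = fact n div (fact p * fact q)" for j unfolding K_def by simp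
    show ?thesis
    proof (cases "0 < m")
      case True
      then have "0 < n - (p + q)" unfolding m_def by simp
      then obtain d where "n - (p + q) = Suc d" by (cases "n - (p+q)") auto
      then have "pochhammer (0::nat) (n - (p + q)) = 0" by (simp add: pochhammer_rec)
      then show ?thesis using True \<open>r = 0\<close> unfolding m_def by (simp add: Kr0)
    next
      case False
      then have sn: "s = n" unfolding m_def s_def using ps by simp
      have "fact n div (fact p * fact q) = (s choose p)"
        using fpq sn by (metis dvd_triv_left dvd_div_eq_mult fact_gt_zero mult_of_nat_commute mult_pos_pos not_gr0 of_nat_id)
      then show ?thesis using False \<open>r = 0\<close> sn unfolding m_def s_def by (simp add: Kr0)
    qed
  next
    case False
    then obtain r' where rr: "r = Suc r'" by (cases r) auto
    show ?thesis
    proof (cases "r \<le> m")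
      case False
      have z1: "K n p q m r = 0" "K n p q (m-1) r = 0" unfolding K_def using False by auto
      have z2: "\<not> (p + q \<le> n - r)" using False ps rn unfolding m_def by arith
      show ?thesis using z1 z2 unfolding m_def by simp
    next
      case True
      define k where "k = m - r"
      define N where "N = n - r"
      define D where "D = fact r * fact p * (fact q :: nat)"
      have m1: "0 < m" using True rr by simp
      have kN: "k = N - s" "s \<le> N" "r \<le> n" using True ps unfolding k_def N_def m_def s_def by auto
      have a1: "K n p q m r * D = (m choose r) * fact n" unfolding D_def m_def using ps by (intro K_mul) simp
      have a2: "K n p q (m - 1) r * D = ((m - 1) choose r) * fact n" unfolding D_def m_def using ps by (intro K_mul) simp
      have pas: "(m choose r) = ((m - 1) choose r) + ((m - 1) choose r')"
        using m1 rr by (metis Suc_diff_1 binomial_Suc_Suc add.commute)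
      have pc: "pochhammer r k = ((m - 1) choose r') * fact k"
      proof -
        have "pochhammer r k = ((r' + k) choose k) * fact k" unfolding rr by (rule poch_nat_choose)
        also have "r' + k = m - 1" unfolding k_def using True rr by simp
        also have "((m - 1) choose k) = ((m - 1) choose r')"
          using binomial_symmetric[of k "m - 1"] True rr unfolding k_def by simp
        finally show ?thesis .
      qed
      have f1: "(N choose s) * fact s * fact k = fact N"
        using binomial_fact_lemma[of s N] kN by (simp add: algebra_simps)
      have f2: "(n choose r) * fact r * fact N = fact n"
        using binomial_fact_lemma[of r n] kN unfolding N_def by (simp add: algebra_simps)
      have R: "((n choose r) * (N choose s) * (s choose p) * pochhammer r k) * D = ((m - 1) choose r') * fact n"
      proof -
        have "((n choose r) * (N choose s) * (s choose p) * pochhammer r k) * D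
            = ((m - 1) choose r') * ((n choose r) * fact r * (((N choose s) * (fact p * fact q * (s choose p))) * fact k))"
          unfolding pc D_def by (simp add: algebra_simps)
        also have "\<dots> = ((m - 1) choose r') * fact n" unfolding fpq f1 f2 by simp
        finally show ?thesis .
      qed
      have "K n p q m r * D = (K n p q (m - 1) r + (n choose r) * (N choose s) * (s choose p) * pochhammer r k) * D"
        unfolding distrib_right a1 a2 R pas by (simp add: algebra_simps)
      then have "K n p q m r = K n p q (m - 1) r + (n choose r) * (N choose s) * (s choose p) * pochhammer r k"
        unfolding D_def by simp
      then show ?thesis using m1 kN unfolding m_def[symmetric] s_def[symmetric] N_def[symmetric] k_def
        by (simp add: N_def k_def m_def s_def)
    qed
  qed
qed

lemma rhs_poch:
  fixes x y :: "'a::comm_ring_1"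
  assumes "r \<le> n"
  shows "(\<Prod>i\<in>{r..<n}. x + y + of_nat i) = pochhammer (of_nat r + (x + y)) (n - r)"
proof -
  have e: "{r..<n} = {0 + r..<(n - r) + r}" using assms by simp
  have "(\<Prod>i\<in>{r..<n}. x + y + of_nat i) = (\<Prod>i\<in>{0..<n - r}. x + y + of_nat (i + r))"
    unfolding e by (rule prod.shift_bounds_nat_ivl)
  also have "\<dots> = pochhammer (of_nat r + (x + y)) (n - r)"
    unfolding pochhammer_prod by (rule prod.cong) (auto simp: algebra_simps)
  finally show ?thesis .
qed

lemma rhs_expand:
  fixes x y :: "'a::comm_ring_1"
  shows "pochhammer (of_nat r + (x + y)) N = (\<Sum>s\<le>N. of_nat (N choose s) * of_nat (pochhammer r (N - s)) * pochhammer (x + y) s)"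
proof -
  have "pochhammer (of_nat r + (x + y)) N = (\<Sum>k\<in>{0..N}. of_nat (N choose k) * pochhammer (of_nat r) k * pochhammer (x + y) (N - k))"
    unfolding pochhammer_binomial_sum atMost_atLeast0 ..
  also have "\<dots> = (\<Sum>k\<in>{0..N}. of_nat (N choose (N + 0 - k)) * pochhammer (of_nat r) (N + 0 - k) * pochhammer (x + y) (N - (N + 0 - k)))"
    by (rule sum.atLeastAtMost_rev)
  also have "\<dots> = (\<Sum>s\<le>N. of_nat (N choose s) * of_nat (pochhammer r (N - s)) * pochhammer (x + y) s)"
    unfolding atMost_atLeast0
    by (rule sum.cong[OF refl]) (auto simp: pochhammer_of_nat binomial_symmetric[symmetric])
  finally show ?thesis .
qed

definition R :: "nat \<Rightarrow> nat \<Rightarrow> nat \<Rightarrow> nat \<Rightarrow> nat" where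
  "R n r p q = (if p + q \<le> n - r then (n choose r) * ((n - r) choose (p + q)) * ((p + q) choose p) * pochhammer r (n - r - (p + q)) else 0)"

lemma lhs_final:
  fixes x y :: "'a::comm_ring_1"
  assumes "r \<le> n"
  shows "(\<Sum>(p,q)\<in>{(p,q). p + q \<le> n}. of_nat (R n r p q) * pochhammer x p * pochhammer y q)
     = of_nat (n choose r) * pochhammer (of_nat r + (x + y)) (n - r)"
proof -
  define N where "N = n - r"
  have "(\<Sum>(p,q)\<in>{(p,q). p + q \<le> n}. of_nat (R n r p q) * pochhammer x p * pochhammer y q)
     = (\<Sum>s\<le>n. \<Sum>p\<le>s. of_nat (R n r p (s - p)) * pochhammer x p * pochhammer y (s - p))"
    by (rule sum.triangle_reindex_eq)
  also have "\<dots> = (\<Sum>s\<le>N. \<Sum>p\<le>s. of_nat (R n r p (s - p)) * pochhammer x p * pochhammer y (s - p))"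
  proof (rule sum.mono_neutral_right)
    show "{..N} \<subseteq> {..n}" unfolding N_def by auto
    show "\<forall>s\<in>{..n} - {..N}. (\<Sum>p\<le>s. of_nat (R n r p (s - p)) * pochhammer x p * pochhammer y (s - p)) = (0::'a)"
      unfolding R_def N_def by auto
  qed simp
  also have "\<dots> = (\<Sum>s\<le>N. of_nat (n choose r) * (of_nat (N choose s) * of_nat (pochhammer r (N - s)) * pochhammer (x + y) s))"
  proof (rule sum.cong[OF refl])
    fix s assume s: "s \<in> {..N}"
    have "(\<Sum>p\<le>s. of_nat (R n r p (s - p)) * pochhammer x p * pochhammer y (s - p))
        = (\<Sum>p\<le>s. (of_nat (n choose r) * of_nat (N choose s) * of_nat (pochhammer r (N - s))) * (of_nat (s choose p) * pochhammer x p * pochhammer y (s - p)))"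
      by (rule sum.cong[OF refl]) (use s in \<open>auto simp: R_def N_def algebra_simps\<close>)
    also have "\<dots> = (of_nat (n choose r) * of_nat (N choose s) * of_nat (pochhammer r (N - s))) * pochhammer (x + y) s"
      unfolding pochhammer_binomial_sum[of x y s] by (simp add: sum_distrib_left)
    finally show "(\<Sum>p\<le>s. of_nat (R n r p (s - p)) * pochhammer x p * pochhammer y (s - p))
        = of_nat (n choose r) * (of_nat (N choose s) * of_nat (pochhammer r (N - s)) * pochhammer (x + y) s)"
      by (simp add: algebra_simps)
  qed
  also have "\<dots> = of_nat (n choose r) * pochhammer (of_nat r + (x + y)) N"
    unfolding rhs_expand[of r x y N] by (simp add: sum_distrib_left)
  finally show ?thesis unfolding N_def .
qed

lemma asm_lasts:
  assumes "A \<in> asm S (Suc r)"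
  shows "last (hd A) \<in> S" "last (last A) \<in> S" "last (last A) \<le> last (hd A)"
proof -
  have ne: "A \<noteq> []" "\<forall>b\<in>set A. b \<noteq> []" "set (concat A) = S" "sorted_wrt (>) (map last A)"
    using assms unfolding asm_def by auto
  have "hd A \<in> set A" "last A \<in> set A" using ne(1) by auto
  have "hd A \<noteq> []" "last A \<noteq> []" using ne(2) \<open>hd A \<in> set A\<close> \<open>last A \<in> set A\<close> by auto
  then have "last (hd A) \<in> set (hd A)" "last (last A) \<in> set (last A)" by auto
  then show "last (hd A) \<in> S" "last (last A) \<in> S"
    using \<open>hd A \<in> set A\<close> \<open>last A \<in> set A\<close> ne(3) by auto
  show "last (last A) \<le> last (hd A)" using sorted_last_le_hd[OF ne(4) ne(1)] \<open>last A \<in> set A\<close> by simp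
qed

lemma cnt1: "p \<le> n \<Longrightarrow> card {s\<in>{1..Suc n}. Suc n - p < s} = p"
proof -
  assume "p \<le> n"
  then have "{s\<in>{1..Suc n}. Suc n - p < s} = {Suc (Suc n - p)..Suc n}" by auto
  then show ?thesis using \<open>p \<le> n\<close> by simp
qed

lemma cnt2: "q \<le> n \<Longrightarrow> card {s\<in>{1..Suc n}. 0 \<le> s \<and> s < Suc q} = q"
proof -
  assume "q \<le> n"
  then have "{s\<in>{1..Suc n}. 0 \<le> s \<and> s < Suc q} = {1..q}" by auto
  then show ?thesis by simp
qed

lemma cnt3: "h \<le> Suc n \<Longrightarrow> card {s\<in>{1..Suc n}. L < s \<and> s \<le> h} = h - L"
proof -
  assume "h \<le> Suc n"
  then have "{s\<in>{1..Suc n}. L < s \<and> s \<le> h} = {Suc L..h}" by auto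
  then show ?thesis by simp
qed

lemma block_sum:
  fixes x y :: "'a::comm_ring_1"
  assumes pq: "p + q \<le> n" and rn: "r \<le> n"
  shows "(\<Sum>A\<in>{A\<in>asm {1..Suc n} (Suc r). (Suc n - last (hd A), last (last A) - 1) = (p, q)}.
           x ^ card (lset (last (hd A)) (concat A)) * y ^ card (rset (last (last A)) 0 (concat A)))
       = of_nat (R n r p q) * pochhammer x p * pochhammer y q"
proof -
  define S where "S = {1..Suc n}"
  define h where "h = Suc n - p"
  define L where "L = Suc q"
  have fS: "finite S" unfolding S_def by simp
  have LS: "L \<in> S" unfolding S_def L_def using pq by auto
  have Lh: "L \<le> h" unfolding L_def h_def using pq by simp
  have h1: "1 \<le> h" "h \<le> Suc n" unfolding h_def using pq by auto
  have seteq: "{A\<in>asm S (Suc r). (Suc n - last (hd A), last (last A) - 1) = (p, q)} = fam S r h L - fam S r (h - 1) L"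
  proof (rule set_eqI, rule iffI)
    fix A assume "A \<in> {A\<in>asm S (Suc r). (Suc n - last (hd A), last (last A) - 1) = (p, q)}"
    then have A: "A \<in> asm S (Suc r)" "Suc n - last (hd A) = p" "last (last A) - 1 = q" by auto
    have l: "last (hd A) \<in> S" "last (last A) \<in> S" using asm_lasts[OF A(1)] by auto
    have "last (hd A) = h" "last (last A) = L" using A(2,3) l pq unfolding S_def h_def L_def by auto
    then show "A \<in> fam S r h L - fam S r (h - 1) L" using A(1) h1 unfolding fam_def by auto
  next
    fix A assume "A \<in> fam S r h L - fam S r (h - 1) L"
    then have A: "A \<in> asm S (Suc r)" "last (last A) = L" "last (hd A) = h" unfolding fam_def by auto
    then show "A \<in> {A\<in>asm S (Suc r). (Suc n - last (hd A), last (last A) - 1) = (p, q)}"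
      unfolding h_def L_def using pq by auto
  qed
  have sub: "fam S r (h - 1) L \<subseteq> fam S r h L" unfolding fam_def by auto
  have "(\<Sum>A\<in>fam S r h L - fam S r (h - 1) L.
           x ^ card (lset (last (hd A)) (concat A)) * y ^ card (rset (last (last A)) 0 (concat A)))
      = (\<Sum>A\<in>fam S r h L - fam S r (h - 1) L. x ^ card (lset h (concat A)) * y ^ card (rset L 0 (concat A)))"
  proof (rule sum.cong[OF refl])
    fix A assume "A \<in> fam S r h L - fam S r (h - 1) L"
    then have "last (last A) = L" "last (hd A) \<le> h" "\<not> last (hd A) \<le> h - 1" unfolding fam_def by auto
    then have "last (last A) = L" "last (hd A) = h" by arith+
    then show "x ^ card (lset (last (hd A)) (concat A)) * y ^ card (rset (last (last A)) 0 (concat A))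
      = x ^ card (lset h (concat A)) * y ^ card (rset L 0 (concat A))" by simp
  qed
  also have "\<dots> = G x y S r h h L 0 - G x y S r (h - 1) h L 0"
    unfolding G_def by (rule sum_diff[OF fam_finite[OF fS] sub])
  also have "G x y S r h h L 0 = of_nat (K n p q (n - p - q) r) * pochhammer x p * pochhammer y q"
  proof -
    have "G x y S r h h L 0 = Gc x y S r h h L 0" by (rule G_closed[OF fS LS]) (use Lh in auto)
    also have "\<dots> = of_nat (K n p q (n - p - q) r) * pochhammer x p * pochhammer y q"
      unfolding Gc_def S_def using cnt1[of p n] cnt2[of q n] cnt3[OF h1(2), of L] pq
      unfolding h_def L_def by simp
    finally show ?thesis .
  qed
  also have "G x y S r (h - 1) h L 0 = (if 0 < n - p - q then of_nat (K n p q (n - p - q - 1) r) * pochhammer x p * pochhammer y q else 0)"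
  proof (cases "0 < n - p - q")
    case True
    then have Lh1: "L \<le> h - 1" unfolding L_def h_def by simp
    have "G x y S r (h - 1) h L 0 = Gc x y S r (h - 1) h L 0" by (rule G_closed[OF fS LS]) (use Lh1 in auto)
    also have "\<dots> = of_nat (K n p q (n - p - q - 1) r) * pochhammer x p * pochhammer y q"
      unfolding Gc_def S_def using cnt1[of p n] cnt2[of q n] cnt3[of "h - 1" n L] h1 pq
      unfolding h_def L_def by simp
    finally show ?thesis using True by simp
  next
    case False
    have "fam S r (h - 1) L = {}"
    proof (rule ccontr)
      assume "fam S r (h - 1) L \<noteq> {}"
      then obtain A where A: "A \<in> fam S r (h - 1) L" by blast
      then have "last (last A) = L" "last (hd A) \<le> h - 1" "A \<in> asm S (Suc r)" unfolding fam_def by auto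
      with asm_lasts(3)[OF this(3)] have "L \<le> h - 1" by simp
      then show False using False pq unfolding L_def h_def by simp
    qed
    then show ?thesis using False unfolding G_def by simp
  qed
  also have "of_nat (K n p q (n - p - q) r) * pochhammer x p * pochhammer y q -
      (if 0 < n - p - q then of_nat (K n p q (n - p - q - 1) r) * pochhammer x p * pochhammer y q else 0)
      = of_nat (R n r p q) * pochhammer x p * pochhammer y (q::nat)"
  proof -
    have ceq: "K n p q (n - p - q) r = (if 0 < n - p - q then K n p q (n - p - q - 1) r else 0) + R n r p q"
      using coef_id[OF pq rn] unfolding R_def .
    show ?thesis
    proof (cases "0 < n - p - q")
      case True
      then show ?thesis unfolding ceq by (simp add: ring_distribs)
    next
      case False
      then show ?thesis unfolding ceq by simp
    qed
  qed
  finally show ?thesis unfolding seteq[unfolded S_def, symmetric] S_def .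
qed

theorem mainTheorem1:
  fixes \<alpha> \<beta> :: "'a::field" and n r :: nat
  assumes "r \<le> n" and "\<alpha> \<noteq> 0" and "\<beta> \<noteq> 0"
  shows "(\<Sum>A\<in>assemblees (n+1) (r+1). inverse \<alpha> ^ card (lrs A) * inverse \<beta> ^ card (rls A))
       = of_nat (n choose r) * (\<Prod>i\<in>{r..<n}. inverse \<alpha> + inverse \<beta> + of_nat i)"
proof -
  define x where "x = inverse \<alpha>"
  define y where "y = inverse \<beta>"
  define W where "W A = x ^ card (lset (last (hd A)) (concat A)) * y ^ card (rset (last (last A)) 0 (concat A))" for A
  define gA where "gA A = (Suc n - last (hd A), last (last A) - 1)" for A :: "nat list list"
  define T where "T = {(p, q). p + q \<le> n}"
  have lrs_eq: "lrs A = lset (last (hd A)) (concat A)" for A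
    unfolding lrs_def lset_def aword_def Let_def by simp
  have rls_eq: "rls A = rset (last (last A)) 0 (concat A)" for A
    unfolding rls_def rset_def aword_def Let_def by simp
  have asm_eq: "assemblees (n+1) (r+1) = asm {1..Suc n} (Suc r)"
    unfolding assemblees_def asm_def by (simp only: Suc_eq_plus1)
  have fA: "finite (asm {1..Suc n} (Suc r))" by (rule asm_finite) simp
  have fT: "finite T"
  proof -
    have "T \<subseteq> {..n} \<times> {..n}" unfolding T_def by auto
    then show ?thesis by (rule finite_subset) simp
  qed
  have img: "gA ` asm {1..Suc n} (Suc r) \<subseteq> T"
  proof
    fix z assume "z \<in> gA ` asm {1..Suc n} (Suc r)"
    then obtain A where A: "A \<in> asm {1..Suc n} (Suc r)" "z = gA A" by blast
    note l = asm_lasts[OF A(1)]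
    then show "z \<in> T" unfolding A(2) gA_def T_def by auto
  qed
  have "(\<Sum>A\<in>assemblees (n+1) (r+1). inverse \<alpha> ^ card (lrs A) * inverse \<beta> ^ card (rls A))
      = sum W (asm {1..Suc n} (Suc r))"
    unfolding asm_eq W_def lrs_eq rls_eq x_def y_def ..
  also have "\<dots> = (\<Sum>pq\<in>T. sum W {A \<in> asm {1..Suc n} (Suc r). gA A = pq})"
    by (rule sum.group[OF fA fT img, symmetric])
  also have "\<dots> = (\<Sum>(p,q)\<in>T. of_nat (R n r p q) * pochhammer x p * pochhammer y q)"
  proof (rule sum.cong[OF refl])
    fix pq assume pq: "pq \<in> T"
    obtain p q where pqe: "pq = (p, q)" by (cases pq)
    have "p + q \<le> n" using pq pqe unfolding T_def by simp
    then show "sum W {A \<in> asm {1..Suc n} (Suc r). gA A = pq} = (case pq of (p, q) \<Rightarrow> of_nat (R n r p q) * pochhammer x p * pochhammer y q)"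
      unfolding pqe W_def gA_def using block_sum[of p q n r x y] assms(1) by simp
  qed
  also have "\<dots> = of_nat (n choose r) * pochhammer (of_nat r + (x + y)) (n - r)"
    unfolding T_def by (rule lhs_final[OF assms(1)])
  also have "\<dots> = of_nat (n choose r) * (\<Prod>i\<in>{r..<n}. inverse \<alpha> + inverse \<beta> + of_nat i)"
    unfolding rhs_poch[OF assms(1), symmetric] x_def y_def ..
  finally show ?thesis .
qed

end
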